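(* Let $T$ be a finite rooted tree in which every inner node has at least two children, with node set $V$ and leaf set $L$. Let $X\subseteq V\setminus L$ and $s\in V\setminus X$. If $X$ is thin, then there exists a leaf $t$ which is a descendant of $s$ such that no node on the path from $t$ to $s$ belongs to $X$.
   Context: A set $X\subseteq V\setminus L$ of inner nodes is thin if for every $x\in X$ other than the root, the parent of $x$ does not belong to $X$, and $x$ has at least one sibling (possibly a leaf) that does not belong to $X$. Every node is its own descendant. *)

theory Defs
  imports Main
begin

text \<open>The root is its own parent (par r = r) and every node
  reaches the root by iterating par; this rules out cycles.\<close>

definition rooted_tree :: "'a set \<Rightarrow> 'a \<Rightarrow> ('a \<Rightarrow> 'a) \<Rightarrow> bool" where
  "rooted_tree V r par \<longleftrightarrow> finite V \<and> r \<in> V \<and> par r = r \<and>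
     (\<forall>v\<in>V. par v \<in> V) \<and> (\<forall>v\<in>V. \<exists>n. (par ^^ n) v = r)"

definition children :: "'a set \<Rightarrow> 'a \<Rightarrow> ('a \<Rightarrow> 'a) \<Rightarrow> 'a \<Rightarrow> 'a set" where
  "children V r par v = {c \<in> V. c \<noteq> r \<and> par c = v}"

definition leaves :: "'a set \<Rightarrow> 'a \<Rightarrow> ('a \<Rightarrow> 'a) \<Rightarrow> 'a set" where
  "leaves V r par = {v \<in> V. children V r par v = {}}"

definition full_branching :: "'a set \<Rightarrow> 'a \<Rightarrow> ('a \<Rightarrow> 'a) \<Rightarrow> bool" where
  "full_branching V r par \<longleftrightarrow>
     (\<forall>v \<in> V - leaves V r par. card (children V r par v) \<ge> 2)"

definition thin :: "'a set \<Rightarrow> 'a \<Rightarrow> ('a \<Rightarrow> 'a) \<Rightarrow> 'a set \<Rightarrow> bool" where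
  "thin V r par X \<longleftrightarrow> X \<subseteq> V - leaves V r par \<and>
     (\<forall>x\<in>X. x \<noteq> r \<longrightarrow>
        par x \<notin> X \<and> (\<exists>y \<in> children V r par (par x). y \<noteq> x \<and> y \<notin> X))"

end

theory Submission
  imports Defs
begin

lemma funpow_root: "par r = r \<Longrightarrow> (par ^^ j) r = r"
  by (induction j) auto

lemma no_cycle:
  assumes "rooted_tree V r par" "c \<in> V" "c \<noteq> r" "(par ^^ Suc n) c = c"
  shows False
proof -
  obtain m0 where m0: "(par ^^ m0) c = r" using assms unfolding rooted_tree_def by blast
  have pr: "par r = r" using assms(1) unfolding rooted_tree_def by blast
  have per: "(par ^^ (k * Suc n)) c = c" for k
  proof (induction k)
    case 0 then show ?case by simp
  next
    case (Suc k)
    have "(par ^^ (Suc k * Suc n)) c = (par ^^ Suc n) ((par ^^ (k * Suc n)) c)"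
      by (simp only: mult_Suc funpow_add comp_apply)
    then show ?case using Suc assms(4) by simp
  qed
  have "m0 \<le> m0 * Suc n" by simp
  then have "(par ^^ (m0 * Suc n)) c = (par ^^ (m0 * Suc n - m0)) ((par ^^ m0) c)"
    by (metis funpow_add le_add_diff_inverse2 comp_apply)
  also have "\<dots> = r" using m0 funpow_root[of par r, OF pr] by simp
  finally show False using per[of m0] assms(3) by simp
qed

theorem lemma3p7:
  assumes "rooted_tree V r par"
    and "full_branching V r par"
    and "X \<subseteq> V - leaves V r par"
    and "s \<in> V - X"
    and "thin V r par X"
  shows "\<exists>t \<in> leaves V r par. \<exists>n. (par ^^ n) t = s \<and> (\<forall>k\<le>n. (par ^^ k) t \<notin> X)"
proof -
  define desc where "desc v = {w\<in>V. \<exists>n. (par ^^ n) w = v}" for v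
  have finV: "finite V" using assms(1) unfolding rooted_tree_def by blast
  have key: "\<And>v. v \<in> V - X \<Longrightarrow> card (desc v) = m \<Longrightarrow>
     \<exists>t \<in> leaves V r par. \<exists>n. (par ^^ n) t = v \<and> (\<forall>k\<le>n. (par ^^ k) t \<notin> X)" for m
  proof (induction m rule: less_induct)
    case (less m v)
    show ?case
    proof (cases "v \<in> leaves V r par")
      case True
      then show ?thesis using less.prems by (intro bexI[of _ v] exI[of _ 0]) auto
    next
      case False
      then obtain c where c: "c \<in> children V r par v"
        using less.prems unfolding leaves_def by auto
      have "\<exists>y \<in> children V r par v. y \<notin> X"
      proof (cases "c \<in> X")
        case True
        then have "c \<noteq> r" "par c = v" using c unfolding children_def by auto
        then show ?thesis using True assms(5) unfolding thin_def by metis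
      next
        case False then show ?thesis using c by blast
      qed
      then obtain y where y: "y \<in> children V r par v" "y \<notin> X" by blast
      have yV: "y \<in> V" and yr: "y \<noteq> r" and py: "par y = v"
        using y unfolding children_def by auto
      have sub: "desc y \<subseteq> desc v"
      proof
        fix w assume "w \<in> desc y"
        then obtain n where "w \<in> V" "(par ^^ n) w = y" unfolding desc_def by blast
        then have "(par ^^ Suc n) w = v" using py by simp
        then show "w \<in> desc v" using \<open>w \<in> V\<close> unfolding desc_def by blast
      qed
      have "v \<in> desc v" using less.prems unfolding desc_def by (auto intro: exI[of _ 0])
      moreover have "v \<notin> desc y"
      proof
        assume "v \<in> desc y"
        then obtain n where "(par ^^ n) v = y" unfolding desc_def by blast
        then have "(par ^^ Suc n) y = y" using py by (simp add: funpow_swap1)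
        then show False using no_cycle[OF assms(1) yV yr] by blast
      qed
      ultimately have "desc y \<subset> desc v" using sub by blast
      moreover have "finite (desc v)" using finV unfolding desc_def by simp
      ultimately have "card (desc y) < m" using less.prems psubset_card_mono by metis
      from less.IH[OF this _ refl] yV y(2) obtain t n where
        t: "t \<in> leaves V r par" "(par ^^ n) t = y" "\<forall>k\<le>n. (par ^^ k) t \<notin> X" by blast
      have "(par ^^ Suc n) t = v" using t(2) py by simp
      moreover have "\<forall>k\<le>Suc n. (par ^^ k) t \<notin> X"
        using t(3) calculation less.prems by (metis DiffD2 le_Suc_eq)
      ultimately show ?thesis using t(1) by blast
    qed
  qed
  show ?thesis using key[OF assms(4) refl] .
qed

end
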